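(* Let $n>0$, $c>1$, and $\tau=\min\{n/2,\ n/c\}$. Consider the following algorithm, executed by each agent: drop a pebble at the initial position, then walk clockwise while measuring the distance travelled; the first time (after time $0$) the agent arrives at a point carrying a pebble, if the distance it has travelled so far is strictly less than $\tau$, it reverses direction and walks anti-clockwise forever; otherwise it continues clockwise forever. In the pebble model, for every initial placement of the two agents, this algorithm achieves rendezvous by time $\max\left\{\frac{n}{2(c-1)},\ \frac{n}{c}\right\}$. In particular, each agent uses only one pebble, dropped once at its initial position.
   Context: Model: the cycle is the continuous circle $\mathbb{R}/n\mathbb{Z}$ of length $n$; it is anonymous. Two agents $A$ and $B$ are placed by an adversary at arbitrary initial points and start at the same time. Both run the same deterministic algorithm; they are identical except that the slower agent $B$ has speed $1$ and the faster agent $A$ has speed $c>1$ (an agent does not know which one it is). Both know $n$ and $c$, share a sense of direction (clockwise vs. anti-clockwise), and have a pedometer measuring the distance they have travelled. Agents detect each other when they are at the same point (rendezvous). Pebble model: an agent may drop a pebble at its current location and can detect whether a pebble lies at its current location (the pebbles of the two agents are indistinguishable). The rendezvous time of an algorithm is the worst case, over all initial placements, of the time until the agents are co-located. *)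

theory Defs
  imports Complex_Main
begin

text \<open>Points of the circle R/nZ are represented by real numbers; two reals denote the
same point of the circle iff they differ by an integer multiple of n.
Clockwise is the direction of increasing reals.\<close>

definition ceq :: "real \<Rightarrow> real \<Rightarrow> real \<Rightarrow> bool" where
  "ceq n x y \<longleftrightarrow> (\<exists>k::int. x - y = of_int k * n)"

definition first_pebble_dist :: "real \<Rightarrow> real set \<Rightarrow> real \<Rightarrow> real" where
  "first_pebble_dist n P p0 = Inf {s. 0 < s \<and> (\<exists>q\<in>P. ceq n (p0 + s) q)}"

definition tau :: "real \<Rightarrow> real \<Rightarrow> real" where
  "tau n c = min (n / 2) (n / c)"

text \<open>Position of an agent following the algorithm, started at p0, with pebbles at the
points of P, after having travelled distance s: clockwise up to the first pebble
(distance d); then anti-clockwise forever if d < tau, else clockwise forever.\<close>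

definition walk :: "real \<Rightarrow> real \<Rightarrow> real set \<Rightarrow> real \<Rightarrow> real \<Rightarrow> real" where
  "walk n c P p0 s =
     (let d = first_pebble_dist n P p0
      in if s \<le> d \<or> tau n c \<le> d then p0 + s else p0 + 2 * d - s)"

end

theory Submission
  imports Defs
begin

lemma intmul_nonneg:
  fixes n :: real and k :: int
  assumes "n > 0" "of_int k * n > - n"
  shows "of_int k * n \<ge> 0"
proof -
  have "of_int k > (-1::real)"
  proof (rule ccontr)
    assume "\<not> of_int k > (-1::real)"
    hence "of_int k \<le> (-1::real)" by simp
    hence "of_int k * n \<le> -1 * n" using assms(1) by (intro mult_right_mono) auto
    thus False using assms(2) by simp
  qed
  hence "k \<ge> 0" by simp
  thus ?thesis using assms(1) by simp
qed

lemma fpd_set: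
  fixes n x p0 q :: real
  assumes "n > 0" "0 < x" "x < n" "ceq n q (p0 + x)"
  shows "Inf {s. 0 < s \<and> (\<exists>q'\<in>{p0,q}. ceq n (p0 + s) q')} = x"
proof (rule cInf_eq_minimum)
  obtain j :: int where j: "q - (p0 + x) = of_int j * n" using assms(4) unfolding ceq_def by blast
  have "ceq n (p0 + x) q" unfolding ceq_def by (rule exI[of _ "-j"]) (use j in simp)
  thus "x \<in> {s. 0 < s \<and> (\<exists>q'\<in>{p0,q}. ceq n (p0 + s) q')}" using assms by auto
  fix s assume "s \<in> {s. 0 < s \<and> (\<exists>q'\<in>{p0,q}. ceq n (p0 + s) q')}"
  hence s: "0 < s" and dis: "ceq n (p0 + s) p0 \<or> ceq n (p0 + s) q" by auto
  from dis show "x \<le> s"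
  proof
    assume "ceq n (p0 + s) p0"
    then obtain k :: int where k: "p0 + s - p0 = of_int k * n" unfolding ceq_def by blast
    have "of_int (k - 1) * n \<ge> 0" using intmul_nonneg[OF assms(1), of "k-1"] k s
      by (simp add: algebra_simps)
    hence "of_int k * n \<ge> n" by (simp add: algebra_simps)
    thus ?thesis using k assms(3) by simp
  next
    assume "ceq n (p0 + s) q"
    then obtain k :: int where k: "p0 + s - q = of_int k * n" unfolding ceq_def by blast
    have e: "s - x = of_int (k + j) * n" using k j by (simp add: algebra_simps)
    have "of_int (k + j) * n \<ge> 0" using intmul_nonneg[OF assms(1), of "k+j"] e s assms
      by linarith
    thus ?thesis using e by simp
  qed
qed

lemma fpd:
  fixes n x p0 q :: real
  assumes "n > 0" "0 < x" "x < n" "ceq n q (p0 + x)"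
  shows "first_pebble_dist n {p0,q} p0 = x" "first_pebble_dist n {q,p0} p0 = x"
  using fpd_set[OF assms] unfolding first_pebble_dist_def by (auto simp: insert_commute)

lemma fpd_nonneg:
  fixes n p0 :: real and P
  assumes "n > 0" "p0 \<in> P"
  shows "first_pebble_dist n P p0 \<ge> 0"
  unfolding first_pebble_dist_def
proof (rule cInf_greatest)
  have "ceq n (p0 + n) p0" unfolding ceq_def by (rule exI[of _ 1]) simp
  thus "{s. 0 < s \<and> (\<exists>q\<in>P. ceq n (p0 + s) q)} \<noteq> {}" using assms by auto
qed auto

theorem theorem3:
  fixes n c a b :: real
  assumes "n > 0" and "c > 1"
  shows "\<exists>t\<ge>0. t \<le> max (n / (2 * (c - 1))) (n / c) \<and>
           ceq n (walk n c {a, b} a (c * t)) (walk n c {a, b} b t)"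
proof -
  define m where "m = floor ((b - a) / n)"
  define x where "x = (b - a) - of_int m * n"
  have x0: "0 \<le> x" and xn: "x < n"
  proof -
    have "of_int m \<le> (b - a) / n" "(b - a) / n < of_int m + 1" unfolding m_def by linarith+
    hence "of_int m * n \<le> b - a" "b - a < (of_int m + 1) * n" using assms(1)
      by (simp_all add: field_simps)
    thus "0 \<le> x" "x < n" unfolding x_def by (simp_all add: algebra_simps)
  qed
  have bx: "b = a + x + of_int m * n" unfolding x_def by simp
  define T where "T = max (n / (2 * (c - 1))) (n / c)"
  have tau_le: "tau n c \<le> n / 2" "tau n c \<le> n / c" unfolding tau_def by linarith+
  have nc: "n / c \<le> T" unfolding T_def by simp
  show ?thesis
  proof (cases "x = 0")
    case True
    have "walk n c {a, b} a (c * 0) = a" "walk n c {a, b} b 0 = b"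
      using fpd_nonneg[OF assms(1), of a "{a,b}"] fpd_nonneg[OF assms(1), of b "{a,b}"]
      unfolding walk_def Let_def by auto
    moreover have "ceq n a b" unfolding ceq_def by (rule exI[of _ "-m"]) (use bx True in simp)
    moreover have "0 \<le> T" using assms nc by (smt (verit) divide_pos_pos)
    ultimately show ?thesis unfolding T_def by (intro exI[of _ 0]) auto
  next
    case False
    hence x0': "0 < x" using x0 by simp
    have dA: "first_pebble_dist n {a, b} a = x"
      by (rule fpd(1)[OF assms(1) x0' xn]) (unfold ceq_def, rule exI[of _ m], simp add: bx)
    have dB: "first_pebble_dist n {a, b} b = n - x"
      by (rule fpd(2)) (use x0' xn assms in auto, unfold ceq_def, rule exI[of _ "-m-1"], simp add: bx algebra_simps)
    consider "x < tau n c" | "n - x < tau n c" | "tau n c \<le> x" "tau n c \<le> n - x" by linarith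
    thus ?thesis
    proof cases
      case 1
      define t where "t = (x + n) / (c + 1)"
      have "c * x < c * tau n c" using 1 assms by simp
      moreover have "c * tau n c \<le> n" using tau_le(2) assms by (simp add: field_simps)
      ultimately have cx: "c * x < n" by linarith
      have tle: "t \<le> n / c" unfolding t_def using cx assms by (simp add: field_simps)
      have "n < c * n" using assms by simp
      hence "x < c * n" using xn by linarith
      hence tgt: "x < c * t" unfolding t_def using assms by (simp add: field_simps)
      have t0: "0 \<le> t" unfolding t_def using x0 assms by simp
      have w1: "walk n c {a, b} a (c * t) = a + 2 * x - c * t"
        using 1 tgt unfolding walk_def Let_def dA by auto
      moreover have w2: "walk n c {a, b} b t = b + t"
        using 1 tau_le xn unfolding walk_def Let_def dB by auto
      moreover have e: "(x + n) = (c + 1) * t" unfolding t_def using assms by simp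
      ultimately have "ceq n (walk n c {a, b} a (c * t)) (walk n c {a, b} b t)"
        unfolding ceq_def w1 w2 using e bx by (intro exI[of _ "-m-1"]) (simp add: algebra_simps)
      thus ?thesis using t0 tle nc unfolding T_def by (intro exI[of _ t]) auto
    next
      case 2
      define y where "y = n - x"
      define t where "t = (n + y) / (c + 1)"
      have "c * y < c * tau n c" using 2 assms unfolding y_def by simp
      moreover have "c * tau n c \<le> n" using tau_le(2) assms by (simp add: field_simps)
      ultimately have cy: "c * y < n" by linarith
      have tle: "t \<le> n / c" unfolding t_def using cy assms by (simp add: field_simps)
      have tgt: "y < t" unfolding t_def using assms cy by (simp add: field_simps)
      have t0: "0 \<le> t" unfolding t_def y_def using xn assms by simp
      have w1: "walk n c {a, b} a (c * t) = a + c * t"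
        using 2 tau_le unfolding walk_def Let_def dA by auto
      moreover have w2: "walk n c {a, b} b t = b + 2 * y - t"
        using 2 tgt unfolding walk_def Let_def dB y_def by auto
      moreover have e: "(n + y) = (c + 1) * t" unfolding t_def using assms by simp
      ultimately have "ceq n (walk n c {a, b} a (c * t)) (walk n c {a, b} b t)"
        unfolding ceq_def w1 w2 using e bx y_def by (intro exI[of _ "-m"]) (simp add: algebra_simps)
      thus ?thesis using t0 tle nc unfolding T_def by (intro exI[of _ t]) auto
    next
      case 3
      define t where "t = x / (c - 1)"
      have t0: "0 \<le> t" unfolding t_def using x0 assms by simp
      have tle: "t \<le> T"
      proof (cases "c \<le> 2")
        case True
        hence "tau n c = n / 2" unfolding tau_def using assms by (simp add: field_simps)
        hence "x = n / 2" using 3 by simp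
        hence "t = n / (2 * (c - 1))" unfolding t_def using assms by (simp add: field_simps)
        thus ?thesis unfolding T_def by simp
      next
        case False
        hence "tau n c = n / c" unfolding tau_def using assms by (simp add: field_simps)
        hence ct: "c * tau n c = n" using assms by simp
        have "c * tau n c \<le> c * (n - x)" using 3 assms by simp
        hence "c * (n - x) \<ge> n" using ct by linarith
        hence "x * c \<le> n * (c - 1)" by (simp add: algebra_simps)
        hence "t \<le> n / c" unfolding t_def using assms by (simp add: field_simps)
        thus ?thesis using nc by simp
      qed
      have w1: "walk n c {a, b} a (c * t) = a + c * t"
        using 3 unfolding walk_def Let_def dA by auto
      moreover have w2: "walk n c {a, b} b t = b + t"
        using 3 unfolding walk_def Let_def dB by auto
      moreover have e: "x = (c - 1) * t" unfolding t_def using assms by simp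
      ultimately have "ceq n (walk n c {a, b} a (c * t)) (walk n c {a, b} b t)"
        unfolding ceq_def w1 w2 using e bx by (intro exI[of _ "-m"]) (simp add: algebra_simps)
      thus ?thesis using t0 tle unfolding T_def by (intro exI[of _ t]) auto
    qed
  qed
qed

end
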